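(* Consider the $K$-armed stochastic bandit problem described in the context, with rewards in $[0,1]$, and let the agent use the following UCB policy: for $t=1,\dots,K$ play arm $t$; for $t\ge K+1$ play an arm maximizing \[\frac{S_a(t-1)}{N_a(t-1)}+\sqrt{\frac{\log(t)+3\log\log(t)}{2N_a(t-1)}}\] (ties broken arbitrarily). Let $a^*$ be an optimal arm and $a$ an arm with $\mu_a<\mu_{a^*}$. Then for every $\epsilon>0$ there exist a constant $C_1>0$ and positive numbers $C_2(\epsilon),\beta(\epsilon)$ such that for every integer $n\ge3$, \[\mathbb{E}[N_n(a)] \leq \frac{\log(n)}{2(\mu_a-\mu_{a^*})^2}(1+\epsilon) + C_1\log(\log(n)) + \frac{C_2(\epsilon)}{n^{\beta(\epsilon)}}\;.\]
   Context: Bandit setting: there are $K\ge 2$ arms. For each arm $a\in\{1,\dots,K\}$, $(X_{a,s})_{s\ge1}$ is an i.i.d. sequence of rewards taking values in $[0,1]$ with mean $\mu_a$; the sequences for different arms are independent. At each time $t$ a policy chooses an arm $A_t$ based on past choices and observed rewards, and receives $X_t=X_{A_t,N_{A_t}(t)}$, where $N_a(t)=\sum_{s=1}^t \mathbb{1}\{A_s=a\}$ (also written $N_n(a)$ for $t=n$), and $S_a(t)=\sum_{s\le t}\mathbb{1}\{A_s=a\}X_s$. $\mu_{a^*}=\max_a\mu_a$ and $a^*$ is any arm attaining it. *)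

theory Defs
  imports "HOL-Probability.Probability"
begin

text \<open>Arms are 1..K, times t = 1,2,..., samples of an arm are indexed s = 1,2,...
  A history is the list of arms played so far (h ! (i-1) = A_i) together with the
  list of rewards observed so far (r ! (i-1) = X_i).\<close>

definition cnt :: "nat \<Rightarrow> nat list \<Rightarrow> nat" where
  "cnt a h = length (filter (\<lambda>b. b = a) h)"

definition rsum :: "nat \<Rightarrow> nat list \<Rightarrow> real list \<Rightarrow> real" where
  "rsum a h r = (\<Sum>i<length h. if h ! i = a then r ! i else 0)"

definition ucb_index :: "nat \<Rightarrow> nat list \<Rightarrow> real list \<Rightarrow> nat \<Rightarrow> real" where
  "ucb_index t h r a =
     rsum a h r / real (cnt a h)
     + sqrt ((ln (real t) + 3 * ln (ln (real t))) / (2 * real (cnt a h)))"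

definition is_ucb_choice :: "nat \<Rightarrow> nat \<Rightarrow> nat list \<Rightarrow> real list \<Rightarrow> nat \<Rightarrow> bool" where
  "is_ucb_choice K t h r a \<longleftrightarrow>
     a \<in> {1..K} \<and> (\<forall>b\<in>{1..K}. ucb_index t h r b \<le> ucb_index t h r a)"

text \<open>The play up to time n, for reward table x (x a s = X_{a,s}) and tie-breaking rule tb
  (tb t h r = arm chosen at time t > K from the history (h, r)).  The reward received at
  time t is X_{A_t, N_{A_t}(t)}.\<close>
fun ucb_play :: "nat \<Rightarrow> (nat \<Rightarrow> nat list \<Rightarrow> real list \<Rightarrow> nat) \<Rightarrow> (nat \<Rightarrow> nat \<Rightarrow> real)
                   \<Rightarrow> nat \<Rightarrow> nat list \<times> real list" where
  "ucb_play K tb x 0 = ([], [])"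
| "ucb_play K tb x (Suc t) =
     (let (h, r) = ucb_play K tb x t;
          a = (if Suc t \<le> K then Suc t else tb (Suc t) h r)
      in (h @ [a], r @ [x a (cnt a h + 1)]))"

definition pulls :: "nat \<Rightarrow> (nat \<Rightarrow> nat list \<Rightarrow> real list \<Rightarrow> nat) \<Rightarrow> (nat \<Rightarrow> nat \<Rightarrow> real)
                     \<Rightarrow> nat \<Rightarrow> nat \<Rightarrow> nat" where
  "pulls K tb x n a = cnt a (fst (ucb_play K tb x n))"

end

theory Submission
  imports Defs
begin


lemma cnt_append[simp]: "cnt a (xs @ ys) = cnt a xs + cnt a ys"
  by (simp add: cnt_def)
lemma cnt_Cons[simp]: "cnt a (y # ys) = (if y = a then 1 else 0) + cnt a ys"
  by (simp add: cnt_def)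
lemma cnt_Nil[simp]: "cnt a [] = 0"
  by (simp add: cnt_def)
lemma cnt_le_length: "cnt a h \<le> length h"
  by (simp add: cnt_def)

lemma ucb_play_len: "length (fst (ucb_play K tb x t)) = t \<and> length (snd (ucb_play K tb x t)) = t"
  by (induction t) (auto simp: Let_def split: prod.splits)

lemma ucb_play_Suc_fst: "fst (ucb_play K tb x (Suc t)) = fst (ucb_play K tb x t) @
   [if Suc t \<le> K then Suc t else tb (Suc t) (fst (ucb_play K tb x t)) (snd (ucb_play K tb x t))]"
  by (simp add: Let_def split: prod.splits)

lemma ucb_play_Suc_snd: "snd (ucb_play K tb x (Suc t)) = snd (ucb_play K tb x t) @
   [x (if Suc t \<le> K then Suc t else tb (Suc t) (fst (ucb_play K tb x t)) (snd (ucb_play K tb x t)))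
      (cnt (if Suc t \<le> K then Suc t else tb (Suc t) (fst (ucb_play K tb x t)) (snd (ucb_play K tb x t))) (fst (ucb_play K tb x t)) + 1)]"
  by (simp add: Let_def split: prod.splits)

lemma rsum_snoc: "length r = length h \<Longrightarrow> rsum a (h @ [c]) (r @ [v]) = rsum a h r + (if c = a then v else 0)"
  by (auto simp: rsum_def nth_append intro!: sum.cong)

lemma ucb_play_rsum: "rsum b (fst (ucb_play K tb x t)) (snd (ucb_play K tb x t)) = (\<Sum>s\<in>{1..cnt b (fst (ucb_play K tb x t))}. x b s)"
proof (induction t)
  case 0 then show ?case by (simp add: rsum_def)
next
  case (Suc t)
  define h where "h = fst (ucb_play K tb x t)"
  define r where "r = snd (ucb_play K tb x t)"
  define c where "c = (if Suc t \<le> K then Suc t else tb (Suc t) h r)"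
  have len: "length r = length h" using ucb_play_len[of K tb x t] by (simp add: h_def r_def)
  have f: "fst (ucb_play K tb x (Suc t)) = h @ [c]" using ucb_play_Suc_fst unfolding h_def r_def c_def by metis
  have s: "snd (ucb_play K tb x (Suc t)) = r @ [x c (cnt c h + 1)]" using ucb_play_Suc_snd unfolding h_def r_def c_def by metis
  show ?case using Suc.IH unfolding f s rsum_snoc[OF len] h_def[symmetric] r_def[symmetric]
    by (auto simp: add.commute)
qed

lemma ucb_play_prefix: "m \<le> t \<Longrightarrow> \<exists>ys. fst (ucb_play K tb x t) = fst (ucb_play K tb x m) @ ys"
proof (induction t)
  case 0 then show ?case by simp
next
  case (Suc t)
  show ?case
  proof (cases "m = Suc t")
    case False
    then have "m \<le> t" using Suc by simp
    then obtain ys where "fst (ucb_play K tb x t) = fst (ucb_play K tb x m) @ ys" using Suc by blast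
    then show ?thesis by (subst ucb_play_Suc_fst) auto
  qed simp
qed

lemma ucb_play_init: "t \<le> K \<Longrightarrow> fst (ucb_play K tb x t) = [1..<Suc t]"
  by (induction t) (auto simp: ucb_play_Suc_fst simp del: ucb_play.simps(2))

lemma cnt_notin: "a \<notin> set xs \<Longrightarrow> cnt a xs = 0"
  by (auto simp: cnt_def filter_empty_conv)

lemma cnt_upt_le1: "cnt a [1..<Suc t] \<le> 1"
  by (induction t) (auto simp: cnt_notin)

lemma cnt_upt_ge1: "a \<in> {1..t} \<Longrightarrow> cnt a [1..<Suc t] \<ge> 1"
  by (induction t) (auto simp: le_Suc_eq)

lemma cnt_pos_after_init: "K \<le> t \<Longrightarrow> b \<in> {1..K} \<Longrightarrow> cnt b (fst (ucb_play K tb x t)) \<ge> 1"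
proof -
  assume "K \<le> t" "b \<in> {1..K}"
  then obtain ys where "fst (ucb_play K tb x t) = fst (ucb_play K tb x K) @ ys" using ucb_play_prefix by blast
  then show ?thesis using ucb_play_init[of K K tb x] cnt_upt_ge1[OF \<open>b \<in> {1..K}\<close>] by simp
qed


definition fexp :: "nat \<Rightarrow> real" where "fexp t = ln (real t) + 3 * ln (ln (real t))"

lemma fexp_mono: "3 \<le> p \<Longrightarrow> p \<le> q \<Longrightarrow> fexp p \<le> fexp q"
proof -
  assume "3 \<le> p" "p \<le> q"
  then have "ln (real p) \<le> ln (real q)" by simp
  moreover have "ln (real p) > 0" using \<open>3 \<le> p\<close> by simp
  ultimately have "ln (ln (real p)) \<le> ln (ln (real q))" by simp
  then show ?thesis using \<open>ln (real p) \<le> ln (real q)\<close> by (simp add: fexp_def)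
qed

lemma count_bound:
  fixes x :: "nat \<Rightarrow> nat \<Rightarrow> real" and mu :: real
  assumes K2: "K \<ge> 2"
    and ucb: "\<forall>t h r. K < t \<longrightarrow> length h = t - 1 \<longrightarrow> length r = t - 1
                \<longrightarrow> is_ucb_choice K t h r (tb t h r)"
    and astar: "astar \<in> {1..K}"
    and mn: "m \<le> n"
  shows "cnt a (fst (ucb_play K tb x m)) \<le> 1
    + card {t\<in>{K<..m}. \<exists>k\<in>{1..t-1}. (\<Sum>s\<in>{1..k}. x astar s) / real k + sqrt (fexp t / (2 * real k)) \<le> mu}
    + card {k\<in>{1..n}. k < cnt a (fst (ucb_play K tb x m)) \<and> (\<Sum>s\<in>{1..k}. x a s) / real k + sqrt (fexp n / (2 * real k)) > mu}"
  using mn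
proof (induction m)
  case 0 then show ?case by simp
next
  case (Suc m)
  define h where "h = fst (ucb_play K tb x m)"
  define r where "r = snd (ucb_play K tb x m)"
  define E1 where "E1 = (\<lambda>t::nat. \<exists>k\<in>{1..t-1}. (\<Sum>s\<in>{1..k}. x astar s) / real k + sqrt (fexp t / (2 * real k)) \<le> mu)"
  define E2 where "E2 = (\<lambda>k::nat. (\<Sum>s\<in>{1..k}. x a s) / real k + sqrt (fexp n / (2 * real k)) > mu)"
  have IH: "cnt a h \<le> 1 + card {t\<in>{K<..m}. E1 t} + card {k\<in>{1..n}. k < cnt a h \<and> E2 k}"
    using Suc by (simp add: h_def E1_def E2_def)
  have lenh: "length h = m" and lenr: "length r = m" using ucb_play_len[of K tb x m] by (auto simp: h_def r_def)
  have fin1: "finite {t\<in>{K<..Suc m}. E1 t}" by simp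
  have fin2: "\<And>P. finite {k\<in>{1..n}. P k}" by simp
  have key: "cnt a (fst (ucb_play K tb x (Suc m))) \<le> 1 + card {t\<in>{K<..Suc m}. E1 t} + card {k\<in>{1..n}. k < cnt a (fst (ucb_play K tb x (Suc m))) \<and> E2 k}"
  proof (cases "Suc m \<le> K")
    case True
    then have "cnt a (fst (ucb_play K tb x (Suc m))) \<le> 1" using ucb_play_init cnt_upt_le1 by metis
    then show ?thesis by linarith
  next
    case False
    define c where "c = tb (Suc m) h r"
    have hS: "fst (ucb_play K tb x (Suc m)) = h @ [c]"
      using ucb_play_Suc_fst[of K tb x m] False by (simp add: h_def r_def c_def)
    have ch: "is_ucb_choice K (Suc m) h r c" using ucb lenh lenr False by (simp add: c_def)
    have sub1: "{t\<in>{K<..m}. E1 t} \<subseteq> {t\<in>{K<..Suc m}. E1 t}" by auto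
    have card1: "card {t\<in>{K<..m}. E1 t} \<le> card {t\<in>{K<..Suc m}. E1 t}" by (rule card_mono[OF fin1 sub1])
    show ?thesis
    proof (cases "c = a")
      case False
      then have "cnt a (h @ [c]) = cnt a h" by simp
      then show ?thesis using IH card1 unfolding hS by simp
    next
      case True
      show ?thesis
      proof (cases "E1 (Suc m)")
        case E1: True
        have "{t\<in>{K<..Suc m}. E1 t} = insert (Suc m) {t\<in>{K<..m}. E1 t}" using E1 False by auto
        then have "card {t\<in>{K<..Suc m}. E1 t} = Suc (card {t\<in>{K<..m}. E1 t})" by simp
        moreover have "card {k\<in>{1..n}. k < cnt a h \<and> E2 k} \<le> card {k\<in>{1..n}. k < cnt a (h @ [c]) \<and> E2 k}"
          by (rule card_mono[OF fin2]) auto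
        ultimately show ?thesis using IH True unfolding hS by simp
      next
        case nE1: False
        have mK: "K \<le> m" using False by simp
        define ka where "ka = cnt a h"
        define ks where "ks = cnt astar h"
        have ka1: "ka \<ge> 1" using cnt_pos_after_init[OF mK] ch True by (simp add: ka_def h_def is_ucb_choice_def)
        have ks1: "ks \<ge> 1" using cnt_pos_after_init[OF mK astar] by (simp add: ks_def h_def)
        have kam: "ka \<le> m" using cnt_le_length[of a h] lenh by (simp add: ka_def)
        have ksm: "ks \<le> m" using cnt_le_length[of astar h] lenh by (simp add: ks_def)
        have idx: "\<And>b. ucb_index (Suc m) h r b = (\<Sum>s\<in>{1..cnt b h}. x b s) / cnt b h + sqrt (fexp (Suc m) / (2 * real (cnt b h)))"
          unfolding ucb_index_def h_def r_def ucb_play_rsum fexp_def by simp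
        have "(\<Sum>s\<in>{1..ks}. x astar s) / real ks + sqrt (fexp (Suc m) / (2 * real ks)) > mu"
          using nE1 ks1 ksm unfolding E1_def by force
        then have "ucb_index (Suc m) h r astar > mu" using idx ks_def by simp
        moreover have "ucb_index (Suc m) h r astar \<le> ucb_index (Suc m) h r a"
          using ch True astar by (auto simp: is_ucb_choice_def)
        ultimately have "(\<Sum>s\<in>{1..ka}. x a s) / ka + sqrt (fexp (Suc m) / (2 * real ka)) > mu"
          using idx ka_def by simp
        moreover have "fexp (Suc m) \<le> fexp n" using fexp_mono[of "Suc m" n] Suc.prems False K2 by simp
        then have "sqrt (fexp (Suc m) / (2 * real ka)) \<le> sqrt (fexp n / (2 * real ka))"
          by (intro real_sqrt_le_mono divide_right_mono) auto
        ultimately have E2ka: "E2 ka" unfolding E2_def by linarith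
        have "{k\<in>{1..n}. k < cnt a (h @ [c]) \<and> E2 k} = insert ka {k\<in>{1..n}. k < cnt a h \<and> E2 k}"
          using True E2ka ka1 kam Suc.prems by (auto simp: ka_def)
        then have "card {k\<in>{1..n}. k < cnt a (h @ [c]) \<and> E2 k} = Suc (card {k\<in>{1..n}. k < cnt a h \<and> E2 k})"
          by (simp add: ka_def)
        then show ?thesis using IH True card1 unfolding hS by simp
      qed
    qed
  qed
  then show ?case unfolding E1_def E2_def .
qed


definition ef :: "real \<Rightarrow> real \<Rightarrow> real" where "ef l y = exp (l * y - l\<^sup>2 / 8)"
definition Zf :: "real \<Rightarrow> (nat \<Rightarrow> real) \<Rightarrow> nat \<Rightarrow> real" where
  "Zf l v j = (\<Prod>i\<in>{1..j}. ef l (v i))"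
definition Bf :: "real \<Rightarrow> real \<Rightarrow> (nat \<Rightarrow> real) \<Rightarrow> nat \<Rightarrow> bool" where
  "Bf l c v i = (\<forall>j\<in>{1..<i}. Zf l v j < c)"
definition Wf :: "real \<Rightarrow> real \<Rightarrow> (nat \<Rightarrow> real) \<Rightarrow> nat \<Rightarrow> real" where
  "Wf l c v k = (\<Prod>i\<in>{1..k}. (if Bf l c v i then ef l (v i) else 1))"

lemma Zf_cong: "(\<And>i. i \<in> {1..k} \<Longrightarrow> v i = v' i) \<Longrightarrow> j \<le> k \<Longrightarrow> Zf l v j = Zf l v' j"
  unfolding Zf_def by (intro prod.cong) auto

lemma Bf_cong: "(\<And>i. i \<in> {1..k} \<Longrightarrow> v i = v' i) \<Longrightarrow> i \<le> Suc k \<Longrightarrow> Bf l c v i = Bf l c v' i"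
  unfolding Bf_def using Zf_cong[of k v v'] by (intro ball_cong) auto

lemma Wf_cong: "(\<And>i. i \<in> {1..k} \<Longrightarrow> v i = v' i) \<Longrightarrow> Wf l c v k = Wf l c v' k"
  unfolding Wf_def using Bf_cong[of k v v'] by (intro prod.cong) auto

lemma Zf_exp: "Zf l v k = exp (l * (\<Sum>i\<in>{1..k}. v i) - real k * l\<^sup>2 / 8)"
  unfolding Zf_def ef_def by (simp add: exp_sum[symmetric] sum_subtractf sum_distrib_left)

lemma Wf_Suc: "Wf l c v (Suc k) = Wf l c v k * (if Bf l c v (Suc k) then ef l (v (Suc k)) else 1)"
  unfolding Wf_def by simp

lemma Wf_stop:
  assumes k0: "k0 \<in> {1..m}" "Zf l v k0 \<ge> c" "\<forall>j\<in>{1..<k0}. Zf l v j < c"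
  shows "Wf l c v m = Zf l v k0"
proof -
  have "{1..m} = {1..k0} \<union> {k0<..m}" using k0 by auto
  then have "Wf l c v m = (\<Prod>i\<in>{1..k0}. (if Bf l c v i then ef l (v i) else 1)) *
       (\<Prod>i\<in>{k0<..m}. (if Bf l c v i then ef l (v i) else 1))"
    unfolding Wf_def by (simp add: prod.union_disjoint ivl_disj_int)
  also have "(\<Prod>i\<in>{1..k0}. (if Bf l c v i then ef l (v i) else 1)) = Zf l v k0"
    unfolding Zf_def using k0 by (intro prod.cong) (auto simp: Bf_def)
  also have "(\<Prod>i\<in>{k0<..m}. (if Bf l c v i then ef l (v i) else 1)) = 1"
  proof (intro prod.neutral ballI)
    fix i assume i: "i \<in> {k0<..m}"
    have "\<not> Bf l c v i" unfolding Bf_def using k0 i by (auto intro!: bexI[of _ k0])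
    then show "(if Bf l c v i then ef l (v i) else 1) = 1" by simp
  qed
  finally show ?thesis by simp
qed

lemma Wf_meas: "(\<lambda>v. Wf l c v k * (if Bf l c v (Suc k) then 1 else 0)) \<in> borel_measurable (PiM {1..k} (\<lambda>_. borel))"
  unfolding Wf_def Bf_def Zf_def ef_def
  by measurable

lemma ef_bound: "\<bar>y\<bar> \<le> 1 \<Longrightarrow> 0 \<le> ef l y \<and> ef l y \<le> exp \<bar>l\<bar>"
proof -
  assume y: "\<bar>y\<bar> \<le> 1"
  have "l * y \<le> \<bar>l\<bar>" using y abs_mult[of l y] abs_ge_self[of "l*y"]
    by (metis abs_ge_zero abs_ge_self mult_left_le order_trans abs_mult)
  moreover have "l\<^sup>2 / 8 \<ge> 0" by simp
  ultimately have "l * y - l\<^sup>2 / 8 \<le> \<bar>l\<bar>" by linarith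
  then show ?thesis unfolding ef_def by simp
qed

lemma Wf_bound:
  assumes "\<And>i. i \<in> {1..k} \<Longrightarrow> \<bar>v i\<bar> \<le> 1"
  shows "0 \<le> Wf l c v k \<and> Wf l c v k \<le> exp \<bar>l\<bar> ^ k"
proof
  show "0 \<le> Wf l c v k" unfolding Wf_def using assms ef_bound by (intro prod_nonneg) auto
  show "Wf l c v k \<le> exp \<bar>l\<bar> ^ k" unfolding Wf_def
    using assms ef_bound by (intro prod_le_power) auto
qed

lemma Wf_meas2: "(\<lambda>v. Wf l c v k) \<in> borel_measurable (PiM {1..k} (\<lambda>_. borel))"
  unfolding Wf_def Bf_def Zf_def ef_def
  by measurable

lemma maximal_ineq:
  fixes M :: "'w measure" and Y :: "nat \<Rightarrow> 'w \<Rightarrow> real"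
  assumes P: "prob_space M"
    and ind: "prob_space.indep_vars M (\<lambda>_. borel) Y {1..}"
    and bnd: "\<And>i \<omega>. 1 \<le> i \<Longrightarrow> \<omega> \<in> space M \<Longrightarrow> \<bar>Y i \<omega>\<bar> \<le> 1"
    and mgf: "\<And>i. 1 \<le> i \<Longrightarrow> (\<integral>\<omega>. ef l (Y i \<omega>) \<partial>M) \<le> 1"
  shows "measure M {\<omega>\<in>space M. \<exists>k\<in>{1..m}. l * (\<Sum>i\<in>{1..k}. Y i \<omega>) - real k * l\<^sup>2 / 8 \<ge> x} \<le> exp (-x)"
proof -
  interpret prob_space M by (rule P)
  define c where "c = exp x"
  have c: "c > 0" by (simp add: c_def)
  define W where "W k \<omega> = Wf l c (\<lambda>i. Y i \<omega>) k" for k \<omega>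
  have measY: "\<And>i. 1 \<le> i \<Longrightarrow> Y i \<in> borel_measurable M"
    using ind unfolding indep_vars_def by auto
  have measR: "\<And>A. A \<subseteq> {1..} \<Longrightarrow> (\<lambda>\<omega>. restrict (\<lambda>i. Y i \<omega>) A) \<in> measurable M (PiM A (\<lambda>_. borel))"
    using measY by (intro measurable_restrict) auto
  have Wr: "W k \<omega> = Wf l c (restrict (\<lambda>i. Y i \<omega>) {1..k}) k" for k \<omega>
    unfolding W_def by (rule Wf_cong) auto
  have measW: "W k \<in> borel_measurable M" for k
  proof -
    have "W k = (\<lambda>v. Wf l c v k) \<circ> (\<lambda>\<omega>. restrict (\<lambda>i. Y i \<omega>) {1..k})"
      using Wr by auto
    then show ?thesis using measurable_comp[OF measR Wf_meas2] by auto
  qed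
  have Wbnd: "\<omega> \<in> space M \<Longrightarrow> 0 \<le> W k \<omega> \<and> W k \<omega> \<le> exp \<bar>l\<bar> ^ k" for k \<omega>
    unfolding W_def using bnd by (intro Wf_bound) auto
  have intW: "integrable M (W k)" for k
    using Wbnd measW by (intro integrable_const_bound[where B="exp \<bar>l\<bar> ^ k"]) auto
  have step: "(\<integral>\<omega>. W (Suc k) \<omega> \<partial>M) \<le> (\<integral>\<omega>. W k \<omega> \<partial>M)" for k
  proof -
    define g where "g v = Wf l c v k * (if Bf l c v (Suc k) then 1 else 0)" for v
    define h where "h v = ef l (v (Suc k))" for v :: "nat \<Rightarrow> real"
    define G where "G = g \<circ> (\<lambda>\<omega>. restrict (\<lambda>i. Y i \<omega>) {1..k})"
    define F where "F = h \<circ> (\<lambda>\<omega>. restrict (\<lambda>i. Y i \<omega>) {Suc k})"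
    have Geq: "G \<omega> = W k \<omega> * (if Bf l c (\<lambda>i. Y i \<omega>) (Suc k) then 1 else 0)" for \<omega>
      unfolding G_def g_def W_def o_def
      using Wf_cong[of k "restrict (\<lambda>i. Y i \<omega>) {1..k}" "\<lambda>i. Y i \<omega>"]
        Bf_cong[of k "restrict (\<lambda>i. Y i \<omega>) {1..k}" "\<lambda>i. Y i \<omega>"] by simp
    have Feq: "F \<omega> = ef l (Y (Suc k) \<omega>)" for \<omega> unfolding F_def h_def by simp
    have gm: "g \<in> borel_measurable (PiM {1..k} (\<lambda>_. borel))"
      unfolding g_def by (rule Wf_meas)
    have hm: "h \<in> borel_measurable (PiM {Suc k} (\<lambda>_. borel))"
      unfolding h_def ef_def by measurable
    have iv: "indep_var borel G borel F"
      unfolding G_def F_def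
      by (rule indep_var_compose[OF indep_var_restrict[OF ind] gm hm]) auto
    have measG: "G \<in> borel_measurable M" unfolding G_def using measurable_comp[OF measR gm] by auto
    have measF: "F \<in> borel_measurable M" unfolding F_def using measurable_comp[OF measR hm] by auto
    have Gbnd: "\<omega> \<in> space M \<Longrightarrow> 0 \<le> G \<omega> \<and> G \<omega> \<le> exp \<bar>l\<bar> ^ k" for \<omega>
      using Wbnd[of \<omega> k] unfolding Geq by auto
    have Fbnd: "\<omega> \<in> space M \<Longrightarrow> 0 \<le> F \<omega> \<and> F \<omega> \<le> exp \<bar>l\<bar>" for \<omega>
      unfolding Feq using bnd ef_bound by auto
    have intG: "integrable M G"
      using Gbnd measG by (intro integrable_const_bound[where B="exp \<bar>l\<bar> ^ k"]) auto
    have intF: "integrable M F"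
      using Fbnd measF by (intro integrable_const_bound[where B="exp \<bar>l\<bar>"]) auto
    have prodeq: "(\<integral>\<omega>. G \<omega> * F \<omega> \<partial>M) = (\<integral>\<omega>. G \<omega> \<partial>M) * (\<integral>\<omega>. F \<omega> \<partial>M)"
      by (rule indep_var_lebesgue_integral[OF iv intG intF])
    have intGF: "integrable M (\<lambda>\<omega>. G \<omega> * F \<omega>)"
      by (rule indep_var_integrable[OF iv intG intF])
    have EG: "(\<integral>\<omega>. G \<omega> \<partial>M) \<ge> 0" using Gbnd by (intro integral_nonneg_AE) auto
    have EF: "(\<integral>\<omega>. F \<omega> \<partial>M) \<le> 1" unfolding Feq using mgf by simp
    have Weq: "W (Suc k) \<omega> = W k \<omega> - G \<omega> + G \<omega> * F \<omega>" for \<omega>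
      unfolding Geq Feq W_def Wf_Suc by auto
    have "(\<integral>\<omega>. W (Suc k) \<omega> \<partial>M) = (\<integral>\<omega>. W k \<omega> \<partial>M) - (\<integral>\<omega>. G \<omega> \<partial>M) + (\<integral>\<omega>. G \<omega> * F \<omega> \<partial>M)"
      unfolding Weq using intW intG intGF by simp
    also have "\<dots> \<le> (\<integral>\<omega>. W k \<omega> \<partial>M)"
      unfolding prodeq using EG EF mult_left_le[of "\<integral>\<omega>. F \<omega> \<partial>M" "\<integral>\<omega>. G \<omega> \<partial>M"] by linarith
    finally show ?thesis .
  qed
  have EW: "(\<integral>\<omega>. W k \<omega> \<partial>M) \<le> 1" for k
  proof (induction k)
    case 0 then show ?case by (simp add: W_def Wf_def)
  next
    case (Suc k) then show ?case using step[of k] by linarith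
  qed
  have sub: "{\<omega>\<in>space M. \<exists>k\<in>{1..m}. l * (\<Sum>i\<in>{1..k}. Y i \<omega>) - real k * l\<^sup>2 / 8 \<ge> x}
      \<subseteq> {\<omega>\<in>space M. W m \<omega> \<ge> c}"
  proof safe
    fix \<omega> k assume \<omega>: "\<omega> \<in> space M" and k: "k \<in> {1..m}" and ge: "l * (\<Sum>i\<in>{1..k}. Y i \<omega>) - real k * l\<^sup>2 / 8 \<ge> x"
    define v where "v = (\<lambda>i. Y i \<omega>)"
    define P where "P k \<longleftrightarrow> k \<in> {1..m} \<and> Zf l v k \<ge> c" for k
    have Pk: "P k" unfolding P_def c_def using k ge by (simp add: Zf_exp v_def)
    define k0 where "k0 = (LEAST k. P k)"
    have P0: "P k0" unfolding k0_def by (rule LeastI[of P, OF Pk])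
    have lt: "\<forall>j\<in>{1..<k0}. Zf l v j < c"
    proof
      fix j assume j: "j \<in> {1..<k0}"
      then have "\<not> P j" unfolding k0_def using not_less_Least by auto
      then show "Zf l v j < c" using j P0 unfolding P_def by auto
    qed
    have "W m \<omega> = Zf l v k0" unfolding W_def v_def[symmetric]
      using P0 lt by (intro Wf_stop) (auto simp: P_def)
    then show "c \<le> W m \<omega>" using P0 by (simp add: P_def)
  qed
  have "measure M {\<omega>\<in>space M. \<exists>k\<in>{1..m}. l * (\<Sum>i\<in>{1..k}. Y i \<omega>) - real k * l\<^sup>2 / 8 \<ge> x}
      \<le> measure M {\<omega>\<in>space M. W m \<omega> \<ge> c}"
    using sub measW[of m] by (intro finite_measure_mono) auto
  also have "\<dots> \<le> (\<integral>\<omega>. W m \<omega> \<partial>M) / c"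
    using intW Wbnd c by (intro integral_Markov_inequality_measure[where A="space M"]) auto
  also have "\<dots> \<le> 1 / c" using EW[of m] c by (simp add: divide_right_mono)
  also have "\<dots> = exp (-x)" by (simp add: c_def exp_minus divide_inverse)
  finally show ?thesis .
qed


lemma slice_ineq:
  fixes f \<delta> c k D :: real
  assumes f: "f > 0" and \<delta>: "0 < \<delta>" "\<delta> < 1" and c: "c > 0"
    and k1: "(1-\<delta>)\<^sup>2 * c \<le> k" and k2: "k \<le> (1+\<delta>)\<^sup>2 * c"
    and D: "D \<ge> sqrt (k * f / 2)"
  shows "sqrt (8*f/c) * D - k * (sqrt (8*f/c))\<^sup>2 / 8 \<ge> f * (1 - \<delta>\<^sup>2)"
proof -
  have k0: "k \<ge> 0" using k1 c by (smt (verit) mult_nonneg_nonneg zero_le_power2)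
  define y where "y = sqrt (k / c)"
  have y2: "y\<^sup>2 = k / c" unfolding y_def using k0 c by simp
  have "sqrt ((1-\<delta>)\<^sup>2) \<le> y" unfolding y_def using k1 c by (intro real_sqrt_le_mono) (simp add: field_simps)
  then have ylo: "1 - \<delta> \<le> y" using \<delta> by simp
  have "y \<le> sqrt ((1+\<delta>)\<^sup>2)" unfolding y_def using k2 c by (intro real_sqrt_le_mono) (simp add: field_simps)
  then have yhi: "y \<le> 1 + \<delta>" using \<delta> by simp
  have sq: "(sqrt (8*f/c))\<^sup>2 = 8*f/c" using f c by simp
  have "8*f/c * (k*f/2) = (2*f)\<^sup>2 * (k/c)" using c by (simp add: power2_eq_square field_simps)
  then have "sqrt (8*f/c) * sqrt (k * f / 2) = sqrt ((2*f)\<^sup>2) * sqrt (k/c)"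
    by (metis real_sqrt_mult)
  also have "sqrt ((2*f)\<^sup>2) = 2*f" using f by (simp only: real_sqrt_abs)
  finally have e1: "sqrt (8*f/c) * sqrt (k * f / 2) = 2 * f * y" unfolding y_def .
  have "sqrt (8*f/c) * D \<ge> sqrt (8*f/c) * sqrt (k * f / 2)"
    using D f c by (intro mult_left_mono) auto
  then have "sqrt (8*f/c) * D - k * (sqrt (8*f/c))\<^sup>2 / 8 \<ge> 2 * f * y - f * y\<^sup>2"
    unfolding e1 sq y2 using c by (simp add: field_simps)
  moreover have "2 * f * y - f * y\<^sup>2 = f * (1 - (1 - y)\<^sup>2)" by (simp add: power2_eq_square algebra_simps)
  moreover have "(1 - y)\<^sup>2 \<le> \<delta>\<^sup>2" using ylo yhi \<delta> by (intro power2_le_iff_abs_le[THEN iffD2]) auto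
  ultimately show ?thesis using f by (smt (verit) mult_left_mono)
qed


lemma slice_choice:
  fixes r k :: real
  assumes r: "r > 1" and k: "k \<ge> 1"
  shows "\<exists>j::nat. r^j \<le> k \<and> k \<le> r^(Suc j) \<and> real j \<le> ln k / ln r"
proof -
  have lg: "log r k \<ge> 0" using r k by simp
  define j where "j = nat \<lfloor>log r k\<rfloor>"
  have jj: "real j = of_int \<lfloor>log r k\<rfloor>" unfolding j_def using lg by simp
  have fl: "r powr (of_int \<lfloor>log r k\<rfloor>) \<le> k \<and> k < r powr (of_int \<lfloor>log r k\<rfloor> + 1)"
    using floor_log_eq_powr_iff[of k r "\<lfloor>log r k\<rfloor>"] r k by simp
  have "r^j = r powr (real j)" using r by (simp add: powr_realpow)
  moreover have "r^(Suc j) = r powr (real j + 1)" using r powr_realpow[of r "Suc j"] by (simp add: add.commute)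
  moreover have "real j \<le> log r k" unfolding jj by simp
  ultimately show ?thesis using fl jj by (intro exI[of _ j]) (auto simp: log_def)
qed

lemma ln3: "ln (3::real) \<ge> 1"
  using exp_le by (simp add: ln_ge_iff)

lemma exp_quarter: "exp (1/4::real) \<le> 2"
proof (rule ccontr)
  assume "\<not> exp (1/4::real) \<le> 2"
  then have "exp (1/4::real) ^ 4 > 2^4" by (intro power_strict_mono) auto
  moreover have "exp (1/4::real) ^ 4 = exp 1" by (simp add: exp_of_nat_mult[symmetric])
  ultimately show False using exp_le by simp
qed

lemma peel:
  fixes M :: "'w measure" and Y :: "nat \<Rightarrow> 'w \<Rightarrow> real"
  assumes P: "prob_space M"
    and ind: "prob_space.indep_vars M (\<lambda>_. borel) Y {1..}"
    and bnd: "\<And>i \<omega>. 1 \<le> i \<Longrightarrow> \<omega> \<in> space M \<Longrightarrow> \<bar>Y i \<omega>\<bar> \<le> 1"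
    and mgf: "\<And>l i. 0 \<le> l \<Longrightarrow> 1 \<le> i \<Longrightarrow> (\<integral>\<omega>. ef l (Y i \<omega>) \<partial>M) \<le> 1"
    and t: "3 \<le> t"
  shows "measure M {\<omega>\<in>space M. \<exists>k\<in>{1..t-1}. (\<Sum>i\<in>{1..k}. Y i \<omega>) \<ge> sqrt (real k * fexp t / 2)}
         \<le> 6 / (real t * ln (real t))"
proof -
  interpret prob_space M by (rule P)
  have measY[measurable]: "\<And>i. 1 \<le> i \<Longrightarrow> Y i \<in> borel_measurable M"
    using ind unfolding indep_vars_def by auto
  define L where "L = ln (real t)"
  have "ln 3 \<le> ln (real t)" using t by simp
  then have L1: "L \<ge> 1" unfolding L_def using ln3 by linarith
  define f where "f = fexp t"
  have f_eq: "f = L + 3 * ln L" unfolding f_def L_def fexp_def by simp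
  have lnL: "0 \<le> ln L" "ln L \<le> L" using L1 ln_le_minus_one[of L] by auto
  have f1: "f \<ge> 1" and f4: "f \<le> 4 * L" using f_eq lnL L1 by linarith+
  define \<delta> where "\<delta> = 1 / (2 * sqrt f)"
  have sf1: "sqrt f \<ge> 1" using f1 by simp
  have \<delta>0: "\<delta> > 0" and \<delta>h: "\<delta> \<le> 1/2" unfolding \<delta>_def using sf1 by (auto simp: field_simps)
  have fd: "f * \<delta>\<^sup>2 = 1/4" unfolding \<delta>_def using f1 by (simp add: power2_eq_square field_simps)
  define r where "r = ((1+\<delta>)/(1-\<delta>))\<^sup>2"
  have q1: "(1+\<delta>)/(1-\<delta>) > 1" using \<delta>0 \<delta>h by (simp add: field_simps)
  have r1: "r > 1" unfolding r_def using q1 by (simp add: one_less_power)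
  have "ln ((1+\<delta>)/(1-\<delta>)) = ln (1+\<delta>) - ln (1-\<delta>)" using \<delta>0 \<delta>h by (simp add: ln_div)
  moreover have "ln (1+\<delta>) \<ge> 0" using \<delta>0 by simp
  moreover have "ln (1-\<delta>) \<le> -\<delta>" using ln_le_minus_one[of "1-\<delta>"] \<delta>h by simp
  ultimately have lq: "ln ((1+\<delta>)/(1-\<delta>)) \<ge> \<delta>" by linarith
  have lnr: "ln r \<ge> 2 * \<delta>" unfolding r_def using lq by (simp add: ln_realpow)
  have lnr0: "ln r > 0" using lnr \<delta>0 by linarith
  define J where "J = nat \<lfloor>L * sqrt f\<rfloor>"
  define cj where "cj j = r^j / (1-\<delta>)\<^sup>2" for j :: nat
  define lam where "lam j = sqrt (8*f / cj j)" for j :: nat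
  define x0 where "x0 = f * (1 - \<delta>\<^sup>2)"
  define A where "A j = {\<omega>\<in>space M. \<exists>k\<in>{1..t-1}. lam j * (\<Sum>i\<in>{1..k}. Y i \<omega>) - real k * (lam j)\<^sup>2 / 8 \<ge> x0}" for j
  have cj0: "cj j > 0" for j unfolding cj_def using r1 \<delta>h by auto
  have sub: "{\<omega>\<in>space M. \<exists>k\<in>{1..t-1}. (\<Sum>i\<in>{1..k}. Y i \<omega>) \<ge> sqrt (real k * fexp t / 2)} \<subseteq> (\<Union>j\<in>{..J}. A j)"
  proof safe
    fix \<omega> k assume \<omega>: "\<omega> \<in> space M" and k: "k \<in> {1..t-1}" and D: "(\<Sum>i\<in>{1..k}. Y i \<omega>) \<ge> sqrt (real k * fexp t / 2)"
    obtain j where j: "r^j \<le> real k" "real k \<le> r^(Suc j)" "real j \<le> ln (real k) / ln r"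
      using slice_choice[OF r1, of "real k"] k by auto
    have "real j \<le> L / (2 * \<delta>)"
    proof -
      have "real k \<le> real t" using k by auto
      then have "ln (real k) \<le> L" unfolding L_def using k by (subst ln_le_cancel_iff) auto
      moreover have "ln (real k) \<ge> 0" using k by simp
      ultimately have "ln (real k) / ln r \<le> L / (2 * \<delta>)" using lnr lnr0 \<delta>0
        by (meson frac_le le_less_trans zero_less_mult_iff zero_less_numeral L1 linorder_not_le order.trans zero_less_one)
      then show ?thesis using j by linarith
    qed
    also have "L / (2 * \<delta>) = L * sqrt f" unfolding \<delta>_def using sf1 by simp
    finally have jJ: "j \<le> J" unfolding J_def by linarith
    have "(1-\<delta>)\<^sup>2 * cj j = r^j" unfolding cj_def using \<delta>h by simp
    moreover have "(1+\<delta>)\<^sup>2 * cj j = r^(Suc j)" unfolding cj_def r_def using \<delta>h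
      by (simp add: power_divide field_simps)
    ultimately have "lam j * (\<Sum>i\<in>{1..k}. Y i \<omega>) - real k * (lam j)\<^sup>2 / 8 \<ge> x0"
      unfolding lam_def x0_def using slice_ineq[of f \<delta> "cj j" "real k" "\<Sum>i\<in>{1..k}. Y i \<omega>"] f1 \<delta>0 \<delta>h cj0 j D
      by (simp add: f_def)
    then show "\<omega> \<in> (\<Union>j\<in>{..J}. A j)" using jJ \<omega> k unfolding A_def by blast
  qed
  have Ameas: "A j \<in> sets M" for j unfolding A_def by measurable
  have Ab: "measure M (A j) \<le> exp (-x0)" for j
    unfolding A_def
    using f1 cj0[of j] by (intro maximal_ineq[OF P ind bnd mgf]) (auto simp: lam_def)
  have "measure M {\<omega>\<in>space M. \<exists>k\<in>{1..t-1}. (\<Sum>i\<in>{1..k}. Y i \<omega>) \<ge> sqrt (real k * fexp t / 2)}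
      \<le> measure M (\<Union>j\<in>{..J}. A j)"
    using sub Ameas by (intro finite_measure_mono) auto
  also have "\<dots> \<le> (\<Sum>j\<in>{..J}. measure M (A j))"
    using Ameas by (intro finite_measure_subadditive_finite) auto
  also have "\<dots> \<le> (\<Sum>j\<in>{..J}. exp (-x0))" by (intro sum_mono Ab)
  also have "\<dots> = (real J + 1) * exp (-x0)" by simp
  finally have main: "measure M {\<omega>\<in>space M. \<exists>k\<in>{1..t-1}. (\<Sum>i\<in>{1..k}. Y i \<omega>) \<ge> sqrt (real k * fexp t / 2)}
      \<le> (real J + 1) * exp (-x0)" .
  have "exp (-x0) = exp (1/4) * exp (-f)" unfolding x0_def using fd by (simp add: algebra_simps exp_add[symmetric])
  also have "exp (-f) = 1 / (real t * L^3)"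
  proof -
    have "exp (-f) = exp (- L) * exp (- (3 * ln L))" using f_eq by (simp add: exp_add[symmetric])
    also have "exp (- L) = 1 / real t" unfolding L_def using t by (simp add: exp_minus divide_inverse)
    also have "exp (- (3 * ln L)) = 1 / L^3"
    proof -
      have "exp (3 * ln L) = exp (ln L)^3" using exp_of_nat_mult[of 3 "ln L"] by simp
      then have "exp (3 * ln L) = L^3" using L1 by simp
      then show ?thesis by (simp add: exp_minus divide_inverse)
    qed
    finally show ?thesis by simp
  qed
  finally have ex: "exp (-x0) \<le> 2 / (real t * L^3)"
    using exp_quarter t L1 by (simp add: divide_right_mono)
  have "real J \<le> L * sqrt f" unfolding J_def using L1 sf1 by simp
  also have "sqrt f \<le> 2 * L"
  proof -
    have "4 * L \<le> 4 * (L * L)" using L1 by simp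
    then have "f \<le> (2*L)\<^sup>2" using f4 by (simp add: power2_eq_square)
    then have "sqrt f \<le> sqrt ((2*L)\<^sup>2)" by (rule real_sqrt_le_mono)
    then show ?thesis using L1 by (simp only: real_sqrt_abs)
  qed
  finally have "real J \<le> L * (2 * L)" using L1 by (simp add: mult_left_mono)
  moreover have "1 \<le> L * L" using L1 by (metis mult_mono' mult_1 zero_le_one)
  ultimately have "real J + 1 \<le> 3 * L^2" by (simp add: power2_eq_square)
  then have "(real J + 1) * exp (-x0) \<le> 3 * L^2 * (2 / (real t * L^3))"
    using ex by (intro mult_mono) auto
  also have "\<dots> = 6 / (real t * L)" using L1 by (simp add: power2_eq_square power3_eq_cube field_simps)
  finally show ?thesis using main unfolding L_def by linarith
qed


lemma indep_vars_reindex: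
  assumes P: "prob_space M" and ind: "prob_space.indep_vars M M' X I"
    and inj: "inj_on g J" and gJ: "g ` J \<subseteq> I"
  shows "prob_space.indep_vars M (\<lambda>j. M' (g j)) (\<lambda>j. X (g j)) J"
proof -
  interpret prob_space M by (rule P)
  have rv: "\<forall>i\<in>I. random_variable (M' i) (X i)"
    and isets: "indep_sets (\<lambda>i. {X i -` A \<inter> space M | A. A \<in> sets (M' i)}) I"
    using ind unfolding indep_vars_def2 by auto
  show ?thesis unfolding indep_vars_def2
  proof safe
    show "\<And>j. j \<in> J \<Longrightarrow> random_variable (M' (g j)) (X (g j))" using rv gJ by auto
    show "indep_sets (\<lambda>j. {X (g j) -` A \<inter> space M | A. A \<in> sets (M' (g j))}) J"
      unfolding indep_sets_def
    proof (intro conjI ballI allI impI)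
      fix j assume "j \<in> J"
      then show "{X (g j) -` A \<inter> space M | A. A \<in> sets (M' (g j))} \<subseteq> events"
        using rv gJ by (auto simp: measurable_def)
    next
      fix J' A assume J': "J' \<subseteq> J" "J' \<noteq> {}" "finite J'"
        and A: "A \<in> (\<Pi> j\<in>J'. {X (g j) -` B \<inter> space M | B. B \<in> sets (M' (g j))})"
      define A' where "A' i = A (inv_into J' g i)" for i
      have inj': "inj_on g J'" using inj_on_subset[OF inj J'(1)] .
      have iv: "j \<in> J' \<Longrightarrow> inv_into J' g (g j) = j" for j using inj' by simp
      have A'P: "A' \<in> (\<Pi> i\<in>g ` J'. {X i -` A \<inter> space M | A. A \<in> sets (M' i)})"
        using A by (auto simp: A'_def iv Pi_iff)
      have H: "\<forall>J\<subseteq>I. J \<noteq> {} \<longrightarrow> finite J \<longrightarrow> (\<forall>A\<in>Pi J (\<lambda>i. {X i -` A \<inter> space M | A. A \<in> sets (M' i)}). prob (\<Inter>j\<in>J. A j) = (\<Prod>j\<in>J. prob (A j)))"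
        using isets unfolding indep_sets_def by blast
      have "prob (\<Inter>i\<in>g ` J'. A' i) = (\<Prod>i\<in>g ` J'. prob (A' i))"
      proof (rule H[rule_format, OF _ _ _ A'P])
        show "g ` J' \<subseteq> I" using J'(1) gJ by blast
      qed (use J' in auto)
      moreover have "(\<Inter>i\<in>g ` J'. A' i) = (\<Inter>j\<in>J'. A j)" by (auto simp: A'_def iv)
      moreover have "(\<Prod>i\<in>g ` J'. prob (A' i)) = (\<Prod>j\<in>J'. prob (A j))"
        using inj' by (simp add: prod.reindex A'_def iv)
      ultimately show "prob (\<Inter>j\<in>J'. A j) = (\<Prod>j\<in>J'. prob (A j))" by simp
    qed
  qed
qed


locale bandit = prob_space +
  fixes K :: nat and X :: "nat \<Rightarrow> nat \<Rightarrow> 'a \<Rightarrow> real"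
    and tb :: "nat \<Rightarrow> nat list \<Rightarrow> real list \<Rightarrow> nat" and a astar :: nat
  assumes K2: "K \<ge> 2"
    and indep: "indep_vars (\<lambda>_. borel) (\<lambda>(b, s). X b s) ({1..K} \<times> {1..})"
    and ident: "\<forall>b\<in>{1..K}. \<forall>s\<ge>1. distr M borel (X b s) = distr M borel (X b 1)"
    and range: "\<forall>b\<in>{1..K}. \<forall>s\<ge>1. \<forall>\<omega>\<in>space M. 0 \<le> X b s \<omega> \<and> X b s \<omega> \<le> 1"
    and ucb: "\<forall>t h r. K < t \<longrightarrow> length h = t - 1 \<longrightarrow> length r = t - 1
                \<longrightarrow> is_ucb_choice K t h r (tb t h r)"
    and meas: "\<forall>n. (\<lambda>\<omega>. fst (ucb_play K tb (\<lambda>b s. X b s \<omega>) n)) \<in> measurable M (count_space UNIV)"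
    and astar: "astar \<in> {1..K}"
    and opt: "\<forall>b\<in>{1..K}. (\<integral>\<omega>. X b 1 \<omega> \<partial>M) \<le> (\<integral>\<omega>. X astar 1 \<omega> \<partial>M)"
    and arm: "a \<in> {1..K}"
    and gap: "(\<integral>\<omega>. X a 1 \<omega> \<partial>M) < (\<integral>\<omega>. X astar 1 \<omega> \<partial>M)"
begin

lemma indb: "b \<in> {1..K} \<Longrightarrow> indep_vars (\<lambda>_. borel) (\<lambda>s. X b s) {1..}"
proof -
  assume b: "b \<in> {1..K}"
  have sub: "(\<lambda>s. (b, s)) ` {1..} \<subseteq> {1..K} \<times> {1..}" using b by auto
  have inj: "inj_on (\<lambda>s. (b, s)) {1..}" by (auto simp: inj_on_def)
  show ?thesis using indep_vars_reindex[OF prob_space_axioms indep inj sub] by simp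
qed

lemma measX: "b \<in> {1..K} \<Longrightarrow> 1 \<le> s \<Longrightarrow> X b s \<in> borel_measurable M"
proof -
  assume b: "b \<in> {1..K}" and s: "1 \<le> s"
  have "\<forall>i\<in>{1..}. random_variable borel (X b i)" using indb[OF b] unfolding indep_vars_def by blast
  then show ?thesis using s by simp
qed

lemma meanX: "b \<in> {1..K} \<Longrightarrow> 1 \<le> s \<Longrightarrow> (\<integral>\<omega>. X b s \<omega> \<partial>M) = (\<integral>\<omega>. X b 1 \<omega> \<partial>M)"
proof -
  assume b: "b \<in> {1..K}" and s: "1 \<le> s"
  have "(\<integral>\<omega>. X b s \<omega> \<partial>M) = (\<integral>x. x \<partial>distr M borel (X b s))"
    using measX[OF b s] by (intro integral_distr[symmetric]) auto
  also have "\<dots> = (\<integral>x. x \<partial>distr M borel (X b 1))" using ident b s by metis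
  also have "\<dots> = (\<integral>\<omega>. X b 1 \<omega> \<partial>M)" using measX[OF b] by (intro integral_distr) auto
  finally show ?thesis .
qed

definition "mus = (\<integral>\<omega>. X astar 1 \<omega> \<partial>M)"
definition "mua = (\<integral>\<omega>. X a 1 \<omega> \<partial>M)"

lemma mus_range: "0 \<le> mus \<and> mus \<le> 1"
proof -
  have m: "X astar 1 \<in> borel_measurable M" using measX astar by auto
  have r: "\<And>\<omega>. \<omega> \<in> space M \<Longrightarrow> 0 \<le> X astar 1 \<omega> \<and> X astar 1 \<omega> \<le> 1" using range astar by auto
  have i: "integrable M (X astar 1)" using m r by (intro integrable_const_bound[where B=1]) auto
  have "0 \<le> mus" unfolding mus_def using r by (intro integral_nonneg_AE) auto
  moreover have "mus \<le> (\<integral>\<omega>. 1 \<partial>M)" unfolding mus_def using r i by (intro integral_mono_AE) auto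
  ultimately show ?thesis by (simp add: prob_space)
qed

lemma mgf_astar: "0 \<le> l \<Longrightarrow> 1 \<le> i \<Longrightarrow> (\<integral>\<omega>. ef l (mus - X astar i \<omega>) \<partial>M) \<le> 1"
proof -
  assume l: "0 \<le> l" and i: "1 \<le> i"
  have m[measurable]: "X astar i \<in> borel_measurable M" using measX astar i by auto
  have r: "\<And>\<omega>. \<omega> \<in> space M \<Longrightarrow> 0 \<le> X astar i \<omega> \<and> X astar i \<omega> \<le> 1" using range astar i by auto
  show ?thesis
  proof (cases "l = 0")
    case True then show ?thesis by (simp add: ef_def prob_space)
  next
    case False
    then have l0: "l > 0" using l by simp
    interpret ib: interval_bounded_random_variable M "\<lambda>\<omega>. - X astar i \<omega>" "-1" 0
      by unfold_locales (use r in auto)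
    have Em: "expectation (\<lambda>\<omega>. - X astar i \<omega>) = - mus"
      using meanX[OF astar i] by (simp add: mus_def)
    have nn: "(\<integral>\<^sup>+\<omega>. ennreal (exp (l * (mus - X astar i \<omega>))) \<partial>M) \<le> ennreal (exp (l\<^sup>2 / 8))"
      using ib.Hoeffdings_lemma_nn_integral[OF l0] unfolding Em by simp
    have int: "integrable M (\<lambda>\<omega>. exp (l * (mus - X astar i \<omega>)))"
    proof (intro integrable_const_bound[where B="exp l"])
      show "AE \<omega> in M. norm (exp (l * (mus - X astar i \<omega>))) \<le> exp l"
      proof (intro AE_I2)
        fix \<omega> assume w: "\<omega> \<in> space M"
        have "0 \<le> X astar i \<omega>" using r[OF w] by simp
        then have "mus - X astar i \<omega> \<le> 1" using mus_range by linarith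
        then have "l * (mus - X astar i \<omega>) \<le> l" using l mult_left_mono[of _ 1 l] by simp
        then show "norm (exp (l * (mus - X astar i \<omega>))) \<le> exp l" by simp
      qed
    qed measurable
    have "(\<integral>\<^sup>+\<omega>. ennreal (exp (l * (mus - X astar i \<omega>))) \<partial>M) = ennreal (\<integral>\<omega>. exp (l * (mus - X astar i \<omega>)) \<partial>M)"
      using int by (intro nn_integral_eq_integral) auto
    then have I: "(\<integral>\<omega>. exp (l * (mus - X astar i \<omega>)) \<partial>M) \<le> exp (l\<^sup>2 / 8)"
      using nn by (simp add: ennreal_le_iff)
    have "(\<integral>\<omega>. ef l (mus - X astar i \<omega>) \<partial>M) = (\<integral>\<omega>. exp (l * (mus - X astar i \<omega>)) \<partial>M) / exp (l\<^sup>2 / 8)"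
      unfolding ef_def by (simp add: exp_diff)
    also have "\<dots> \<le> 1" using I by simp
    finally show ?thesis .
  qed
qed

end


context bandit begin

lemma E1bound:
  assumes t: "3 \<le> t"
  shows "measure M {\<omega>\<in>space M. \<exists>k\<in>{1..t-1}. (\<Sum>s\<in>{1..k}. X astar s \<omega>) / real k + sqrt (fexp t / (2 * real k)) \<le> mus}
         \<le> 6 / (real t * ln (real t))"
proof -
  define Y where "Y i \<omega> = mus - X astar i \<omega>" for i \<omega>
  have measY[measurable]: "\<And>i. 1 \<le> i \<Longrightarrow> Y i \<in> borel_measurable M"
    unfolding Y_def using measX[OF astar] by measurable
  have indY: "indep_vars (\<lambda>_. borel) Y {1..}"
    unfolding Y_def using indep_vars_compose2[OF indb[OF astar], of "\<lambda>i x. mus - x" "\<lambda>_. borel"] by simp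
  have bnd: "\<And>i \<omega>. 1 \<le> i \<Longrightarrow> \<omega> \<in> space M \<Longrightarrow> \<bar>Y i \<omega>\<bar> \<le> 1"
  proof -
    fix i :: nat and \<omega> assume i: "1 \<le> i" and w: "\<omega> \<in> space M"
    have "0 \<le> X astar i \<omega>" "X astar i \<omega> \<le> 1" using range astar i w by auto
    then show "\<bar>Y i \<omega>\<bar> \<le> 1" unfolding Y_def using mus_range by linarith
  qed
  have mgf: "\<And>l i. 0 \<le> l \<Longrightarrow> 1 \<le> i \<Longrightarrow> (\<integral>\<omega>. ef l (Y i \<omega>) \<partial>M) \<le> 1"
    unfolding Y_def by (rule mgf_astar)
  have pb: "measure M {\<omega>\<in>space M. \<exists>k\<in>{1..t-1}. (\<Sum>i\<in>{1..k}. Y i \<omega>) \<ge> sqrt (real k * fexp t / 2)}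
         \<le> 6 / (real t * ln (real t))"
    by (rule peel[OF prob_space_axioms indY bnd mgf t])
  have sub: "{\<omega>\<in>space M. \<exists>k\<in>{1..t-1}. (\<Sum>s\<in>{1..k}. X astar s \<omega>) / real k + sqrt (fexp t / (2 * real k)) \<le> mus}
     \<subseteq> {\<omega>\<in>space M. \<exists>k\<in>{1..t-1}. (\<Sum>i\<in>{1..k}. Y i \<omega>) \<ge> sqrt (real k * fexp t / 2)}"
  proof safe
    fix \<omega> k assume w: "\<omega> \<in> space M" and k: "k \<in> {1..t-1}"
      and le: "(\<Sum>s\<in>{1..k}. X astar s \<omega>) / real k + sqrt (fexp t / (2 * real k)) \<le> mus"
    have k0: "real k > 0" using k by simp
    have e: "real k * sqrt (fexp t / (2 * real k)) = sqrt (real k * fexp t / 2)"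
    proof -
      have "real k * sqrt (fexp t / (2 * real k)) = sqrt ((real k)\<^sup>2) * sqrt (fexp t / (2 * real k))"
        using k0 by simp
      also have "\<dots> = sqrt ((real k)\<^sup>2 * (fexp t / (2 * real k)))" by (rule real_sqrt_mult[symmetric])
      also have "(real k)\<^sup>2 * (fexp t / (2 * real k)) = real k * fexp t / 2"
        using k0 by (simp add: power2_eq_square field_simps)
      finally show ?thesis .
    qed
    have "(\<Sum>s\<in>{1..k}. X astar s \<omega>) + real k * sqrt (fexp t / (2 * real k)) \<le> real k * mus"
      using le k0 by (simp add: field_simps)
    moreover have "(\<Sum>i\<in>{1..k}. Y i \<omega>) = real k * mus - (\<Sum>s\<in>{1..k}. X astar s \<omega>)"
      unfolding Y_def by (simp add: sum_subtractf)
    ultimately show "\<exists>k\<in>{1..t-1}. (\<Sum>i\<in>{1..k}. Y i \<omega>) \<ge> sqrt (real k * fexp t / 2)"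
      using k e by (intro bexI[of _ k]) auto
  qed
  have "{\<omega>\<in>space M. \<exists>k\<in>{1..t-1}. (\<Sum>i\<in>{1..k}. Y i \<omega>) \<ge> sqrt (real k * fexp t / 2)} \<in> sets M"
    by measurable
  then show ?thesis using pb sub by (meson finite_measure_mono order.trans)
qed

lemma E2bound:
  assumes k: "1 \<le> k" and q: "q \<le> mus - mua"
  shows "measure M {\<omega>\<in>space M. (\<Sum>s\<in>{1..k}. X a s \<omega>) / real k + q > mus}
         \<le> exp (- 2 * real k * (mus - mua - q)\<^sup>2)"
proof -
  have m1[measurable]: "X a 1 \<in> borel_measurable M" using measX[OF arm] by simp
  interpret H: Hoeffding_ineq_iid M "{1..k}" "\<lambda>s. X a s" "X a 1" 0 1 "expectation (X a 1)"
  proof unfold_locales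
    show "finite {1..k}" by simp
    show "indep_vars (\<lambda>_. borel) (\<lambda>s. X a s) {1..k}" using indb[OF arm] by (rule indep_vars_subset) auto
    show "\<And>i. i \<in> {1..k} \<Longrightarrow> distr M borel (X a i) = distr M borel (X a 1)"
    proof -
      fix i assume "i \<in> {1..k}"
      then have "1 \<le> i" by simp
      then show "distr M borel (X a i) = distr M borel (X a 1)" using ident arm by blast
    qed
    show "random_variable borel (X a 1)" by (rule m1)
    have "\<forall>\<omega>\<in>space M. 0 \<le> X a 1 \<omega> \<and> X a 1 \<omega> \<le> 1" using range arm by blast
    then show "AE x in M. X a 1 x \<in> {0..1}" by (intro AE_I2) auto
  qed simp
  define \<epsilon> where "\<epsilon> = real k * (mus - mua - q)"
  have \<epsilon>0: "\<epsilon> \<ge> 0" unfolding \<epsilon>_def using q by simp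
  have ne: "{1..k} \<noteq> {}" using k by simp
  have hb: "prob {x\<in>space M. (\<Sum>i\<in>{1..k}. X a i x) \<ge> real (card {1..k}) * expectation (X a 1) + \<epsilon>} \<le>
               exp (-2 * \<epsilon>\<^sup>2 / (real (card {1..k}) * (1 - 0)\<^sup>2))"
    using H.Hoeffding_ineq_ge[OF \<epsilon>0 zero_less_one ne] .
  have sub: "{\<omega>\<in>space M. (\<Sum>s\<in>{1..k}. X a s \<omega>) / real k + q > mus} \<subseteq>
      {x\<in>space M. (\<Sum>i\<in>{1..k}. X a i x) \<ge> real (card {1..k}) * expectation (X a 1) + \<epsilon>}"
  proof safe
    fix \<omega> assume "\<omega> \<in> space M" "(\<Sum>s\<in>{1..k}. X a s \<omega>) / real k + q > mus"
    then have "(\<Sum>s\<in>{1..k}. X a s \<omega>) > real k * mus - real k * q" using k by (simp add: field_simps)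
    then show "(\<Sum>i\<in>{1..k}. X a i \<omega>) \<ge> real (card {1..k}) * expectation (X a 1) + \<epsilon>"
      unfolding \<epsilon>_def mua_def by (simp add: algebra_simps)
  qed
  have "{x\<in>space M. (\<Sum>i\<in>{1..k}. X a i x) \<ge> real (card {1..k}) * expectation (X a 1) + \<epsilon>} \<in> sets M"
    using measX[OF arm] by measurable
  then have "measure M {\<omega>\<in>space M. (\<Sum>s\<in>{1..k}. X a s \<omega>) / real k + q > mus} \<le>
      exp (-2 * \<epsilon>\<^sup>2 / (real (card {1..k}) * (1 - 0)\<^sup>2))"
    using hb sub by (meson finite_measure_mono order.trans)
  also have "-2 * \<epsilon>\<^sup>2 / (real (card {1..k}) * (1 - 0)\<^sup>2) = - 2 * real k * (mus - mua - q)\<^sup>2"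
    unfolding \<epsilon>_def using k by (simp add: power2_eq_square field_simps)
  finally show ?thesis .
qed

end


lemma ln_ge_1_minus_inv: "(x::real) > 0 \<Longrightarrow> ln x \<ge> 1 - 1 / x"
proof -
  assume x: "x > 0"
  have "ln (1/x) \<le> 1/x - 1" using x ln_le_minus_one[of "1/x"] by simp
  then show ?thesis using x by (simp add: ln_div)
qed

lemma lnln3: "ln (ln (3::real)) \<ge> 1/21"
proof -
  have b: "exp (1/20::real) \<le> 11/10" using real_exp_bound_lemma[of "1/20"] by simp
  have e: "exp (1::real) \<le> 272/100" using e_less_272 by simp
  have "exp (1 + 1/20::real) = exp 1 * exp (1/20)" by (rule exp_add)
  also have "\<dots> \<le> (272/100) * (11/10)" by (rule mult_mono[OF e b]) auto
  finally have "exp (1 + 1/20::real) < 3" by simp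
  then have "ln (exp (1 + 1/20::real)) < ln 3" by (subst ln_less_cancel_iff) auto
  then have l3: "21/20 < ln (3::real)" by simp
  have A: "ln (21/20) \<le> ln (ln (3::real))" using l3 by (subst ln_le_cancel_iff) auto
  have B: "ln (21/20::real) \<ge> 1/21" using ln_ge_1_minus_inv[of "21/20"] by simp
  show ?thesis using A B by linarith
qed

lemma lnln2: "- ln (ln (2::real)) \<le> 1"
proof -
  have l2: "ln (2::real) \<ge> 2/3" by (rule ln2_ge_two_thirds)
  have "ln (ln (2::real)) \<ge> 1 - 1 / ln 2" using l2 by (intro ln_ge_1_minus_inv) simp
  moreover have "1 / ln (2::real) \<le> 1 / (2/3)" using l2 by (intro divide_left_mono) auto
  ultimately show ?thesis by simp
qed

lemma tele_step:
  assumes n: "2 \<le> n"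
  shows "1 / (real (Suc n) * ln (real (Suc n))) \<le> ln (ln (real (Suc n))) - ln (ln (real n))"
proof -
  define u where "u = ln (real n)"
  define v where "v = ln (real (Suc n))"
  have u0: "u > 0" unfolding u_def using n by simp
  have uv: "u < v" unfolding u_def v_def using n by simp
  have "ln (real (Suc n) / real n) \<ge> 1 - real n / real (Suc n)"
    using ln_ge_1_minus_inv[of "real (Suc n) / real n"] n by simp
  then have "v - u \<ge> 1 / real (Suc n)" unfolding u_def v_def using n
    by (simp add: ln_div field_simps)
  moreover have "ln v - ln u \<ge> (v - u) / v"
  proof -
    have "ln (u / v) \<le> u / v - 1" using u0 uv by (intro ln_le_minus_one) simp
    then show ?thesis using u0 uv by (simp add: ln_div field_simps)
  qed
  moreover have "(1 / real (Suc n)) / v \<le> (v - u) / v" using calculation(1) u0 uv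
    by (intro divide_right_mono) auto
  ultimately show ?thesis unfolding u_def v_def by (simp add: field_simps)
qed

lemma tele:
  assumes "2 \<le> n"
  shows "(\<Sum>t\<in>{3..n}. 1 / (real t * ln (real t))) \<le> ln (ln (real n)) - ln (ln 2)"
  using assms
proof (induction n rule: dec_induct)
  case base then show ?case by simp
next
  case (step m)
  have "{3..Suc m} = insert (Suc m) {3..m}" using step by auto
  then have "(\<Sum>t\<in>{3..Suc m}. 1 / (real t * ln (real t))) = 1 / (real (Suc m) * ln (real (Suc m))) + (\<Sum>t\<in>{3..m}. 1 / (real t * ln (real t)))"
    by simp
  then show ?case using step tele_step[OF step(1)] by linarith
qed

lemma geom_bound:
  fixes w :: real
  assumes w: "0 \<le> w" "w < 1" and A: "A \<subseteq> {1..n}"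
  shows "(\<Sum>k\<in>A. w^k) \<le> 1 / (1 - w)"
proof -
  have "(\<Sum>k\<in>A. w^k) \<le> (\<Sum>k<Suc n. w^k)"
    using A w by (intro sum_mono2) auto
  also have "\<dots> = (1 - w^Suc n) / (1 - w)" using sum_gp_strict[of w "Suc n"] w by (simp del: sum.lessThan_Suc)
  also have "\<dots> \<le> 1 / (1 - w)" using w by (intro divide_right_mono) auto
  finally show ?thesis .
qed

lemma card_small:
  assumes u: "0 \<le> u"
  shows "real (card {k\<in>{1..n}. real k < u}) \<le> u"
proof -
  have "{k\<in>{1..n}. real k < u} \<subseteq> {1..<nat \<lceil>u\<rceil>}"
  proof
    fix x assume x: "x \<in> {k\<in>{1..n}. real k < u}"
    then have "real x < u" by simp
    then have "real x < real_of_int \<lceil>u\<rceil>" using le_of_int_ceiling[of u] by linarith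
    then have "int x < \<lceil>u\<rceil>" by linarith
    then show "x \<in> {1..<nat \<lceil>u\<rceil>}" using x by auto
  qed
  then have "card {k\<in>{1..n}. real k < u} \<le> card {1..<nat \<lceil>u\<rceil>}" by (intro card_mono) auto
  also have "card {1..<nat \<lceil>u\<rceil>} = nat \<lceil>u\<rceil> - 1" by simp
  finally have "real (card {k\<in>{1..n}. real k < u}) \<le> real (nat \<lceil>u\<rceil> - 1)" by simp
  also have "\<dots> \<le> u" using u by linarith
  finally show ?thesis .
qed


lemma card_filter_sum: "finite A \<Longrightarrow> real (card {x\<in>A. P x}) = (\<Sum>x\<in>A. if P x then 1 else 0)"
  by (simp add: sum.inter_filter[symmetric])

context bandit begin

definition "E1s t = {\<omega>\<in>space M. \<exists>k\<in>{1..t-1}. (\<Sum>s\<in>{1..k}. X astar s \<omega>) / real k + sqrt (fexp t / (2 * real k)) \<le> mus}"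
definition "E2s n k = {\<omega>\<in>space M. (\<Sum>s\<in>{1..k}. X a s \<omega>) / real k + sqrt (fexp n / (2 * real k)) > mus}"

lemma E1s_sets: "E1s t \<in> sets M"
proof -
  have [measurable]: "\<And>s. 1 \<le> s \<Longrightarrow> X astar s \<in> borel_measurable M" using measX[OF astar] .
  show ?thesis unfolding E1s_def by measurable
qed

lemma E2s_sets: "E2s n k \<in> sets M"
proof -
  have [measurable]: "\<And>s. 1 \<le> s \<Longrightarrow> X a s \<in> borel_measurable M" using measX[OF arm] .
  show ?thesis unfolding E2s_def by measurable
qed

lemma pointwise:
  assumes w: "\<omega> \<in> space M"
  shows "real (pulls K tb (\<lambda>b s. X b s \<omega>) n a) \<le> 1 + (\<Sum>t\<in>{K<..n}. indicator (E1s t) \<omega>) + (\<Sum>k\<in>{1..n}. indicator (E2s n k) \<omega>)"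
proof -
  define x where "x = (\<lambda>b s. X b s \<omega>)"
  have cb: "cnt a (fst (ucb_play K tb x n)) \<le> 1
    + card {t\<in>{K<..n}. \<exists>k\<in>{1..t-1}. (\<Sum>s\<in>{1..k}. x astar s) / real k + sqrt (fexp t / (2 * real k)) \<le> mus}
    + card {k\<in>{1..n}. k < cnt a (fst (ucb_play K tb x n)) \<and> (\<Sum>s\<in>{1..k}. x a s) / real k + sqrt (fexp n / (2 * real k)) > mus}"
    by (rule count_bound[OF K2 ucb astar order.refl])
  have c2: "card {k\<in>{1..n}. k < cnt a (fst (ucb_play K tb x n)) \<and> (\<Sum>s\<in>{1..k}. x a s) / real k + sqrt (fexp n / (2 * real k)) > mus}
      \<le> card {k\<in>{1..n}. (\<Sum>s\<in>{1..k}. x a s) / real k + sqrt (fexp n / (2 * real k)) > mus}"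
    by (intro card_mono) auto
  have i1: "(\<Sum>t\<in>{K<..n}. indicator (E1s t) \<omega>) = real (card {t\<in>{K<..n}. \<exists>k\<in>{1..t-1}. (\<Sum>s\<in>{1..k}. x astar s) / real k + sqrt (fexp t / (2 * real k)) \<le> mus})"
    unfolding card_filter_sum[OF finite_greaterThanAtMost] using w by (intro sum.cong) (auto simp: E1s_def x_def indicator_def)
  have i2: "(\<Sum>k\<in>{1..n}. indicator (E2s n k) \<omega>) = real (card {k\<in>{1..n}. (\<Sum>s\<in>{1..k}. x a s) / real k + sqrt (fexp n / (2 * real k)) > mus})"
    unfolding card_filter_sum[OF finite_atLeastAtMost] using w by (intro sum.cong) (auto simp: E2s_def x_def indicator_def)
  show ?thesis unfolding pulls_def x_def[symmetric] i1 i2 using cb c2 by linarith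
qed

lemma expect_decomp:
  "(\<integral>\<omega>. real (pulls K tb (\<lambda>b s. X b s \<omega>) n a) \<partial>M) \<le> 1 + (\<Sum>t\<in>{K<..n}. measure M (E1s t)) + (\<Sum>k\<in>{1..n}. measure M (E2s n k))"
proof -
  have mp: "(\<lambda>\<omega>. real (pulls K tb (\<lambda>b s. X b s \<omega>) n a)) \<in> borel_measurable M"
  proof -
    have "(\<lambda>\<omega>. real (pulls K tb (\<lambda>b s. X b s \<omega>) n a)) = (\<lambda>h. real (cnt a h)) \<circ> (\<lambda>\<omega>. fst (ucb_play K tb (\<lambda>b s. X b s \<omega>) n))"
      by (auto simp: pulls_def)
    moreover have "(\<lambda>h. real (cnt a h)) \<in> borel_measurable (count_space UNIV)" by simp
    ultimately show ?thesis using measurable_comp[OF meas[rule_format, of n]] by metis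
  qed
  have bp: "\<omega> \<in> space M \<Longrightarrow> norm (real (pulls K tb (\<lambda>b s. X b s \<omega>) n a)) \<le> real n" for \<omega>
    using cnt_le_length ucb_play_len by (simp add: pulls_def) (metis ucb_play_len)
  have ip: "integrable M (\<lambda>\<omega>. real (pulls K tb (\<lambda>b s. X b s \<omega>) n a))"
    using mp bp by (intro integrable_const_bound[where B="real n"]) auto
  have iE1: "integrable M (indicator (E1s t) :: 'a \<Rightarrow> real)" for t
    using E1s_sets[of t] by (intro integrable_real_indicator) (auto simp: less_top[symmetric])
  have iE2: "integrable M (indicator (E2s n k) :: 'a \<Rightarrow> real)" for k
    using E2s_sets[of n k] by (intro integrable_real_indicator) (auto simp: less_top[symmetric])
  have "(\<integral>\<omega>. real (pulls K tb (\<lambda>b s. X b s \<omega>) n a) \<partial>M)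
      \<le> (\<integral>\<omega>. 1 + (\<Sum>t\<in>{K<..n}. indicator (E1s t) \<omega>) + (\<Sum>k\<in>{1..n}. indicator (E2s n k) \<omega>) \<partial>M)"
    using ip iE1 iE2 pointwise by (intro integral_mono) auto
  also have "\<dots> = 1 + (\<Sum>t\<in>{K<..n}. measure M (E1s t)) + (\<Sum>k\<in>{1..n}. measure M (E2s n k))"
    using iE1 iE2 E1s_sets E2s_sets sets.sets_into_space
    by (simp add: prob_space Int_absorb2)
  finally show ?thesis .
qed

end


context bandit begin

lemma E1sum:
  assumes n: "3 \<le> n"
  shows "(\<Sum>t\<in>{K<..n}. measure M (E1s t)) \<le> 6 * ln (ln (real n)) + 6"
proof -
  have "(\<Sum>t\<in>{K<..n}. measure M (E1s t)) \<le> (\<Sum>t\<in>{K<..n}. 6 / (real t * ln (real t)))"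
  proof (intro sum_mono)
    fix t assume t: "t \<in> {K<..n}"
    then have "3 \<le> t" using K2 by auto
    then show "measure M (E1s t) \<le> 6 / (real t * ln (real t))" unfolding E1s_def by (rule E1bound)
  qed
  also have "\<dots> \<le> (\<Sum>t\<in>{3..n}. 6 / (real t * ln (real t)))"
  proof (intro sum_mono2)
    show "{K<..n} \<subseteq> {3..n}" using K2 by auto
  next
    fix t assume "t \<in> {3..n} - {K<..n}"
    then have "3 \<le> t" by auto
    then have "ln (real t) > 0" by simp
    then show "0 \<le> 6 / (real t * ln (real t))" by simp
  qed simp
  also have "\<dots> = 6 * (\<Sum>t\<in>{3..n}. 1 / (real t * ln (real t)))" by (simp add: sum_distrib_left)
  also have "\<dots> \<le> 6 * (ln (ln (real n)) - ln (ln 2))" using tele[of n] n by simp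
  also have "\<dots> \<le> 6 * ln (ln (real n)) + 6" using lnln2 by simp
  finally show ?thesis .
qed

lemma E2term:
  assumes e: "0 < e" and k: "1 \<le> k" and n: "3 \<le> n"
    and ku: "fexp n * (1 + e) / (2 * (mus - mua)\<^sup>2) \<le> real k"
  shows "measure M (E2s n k) \<le> exp (- 2 * real k * ((mus - mua) * (1 - 1 / sqrt (1 + e)))\<^sup>2)"
proof -
  define \<Delta> where "\<Delta> = mus - mua"
  have \<Delta>: "\<Delta> > 0" using gap unfolding \<Delta>_def mus_def mua_def by simp
  define f where "f = fexp n"
  have "ln 3 \<le> ln (real n)" using n by simp
  then have L1: "ln (real n) \<ge> 1" using ln3 by linarith
  have "ln (ln (real n)) \<ge> 0" using L1 by simp
  then have f1: "f \<ge> 1" unfolding f_def fexp_def using L1 by linarith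
  define u where "u = f * (1 + e) / (2 * \<Delta>\<^sup>2)"
  have u0: "u > 0" unfolding u_def using f1 e \<Delta> by simp
  have ku': "u \<le> real k" using ku unfolding u_def f_def \<Delta>_def .
  define q where "q = sqrt (f / (2 * real k))"
  have "f / (2 * real k) \<le> f / (2 * u)" using ku' u0 f1 by (intro divide_left_mono) auto
  also have "f / (2 * u) = \<Delta>\<^sup>2 / (1 + e)"
  proof -
    have h: "2 * u * \<Delta>\<^sup>2 = f * (1 + e)" unfolding u_def using \<Delta> by simp
    show ?thesis using h u0 e by (subst frac_eq_eq) (auto simp: algebra_simps)
  qed
  finally have "q \<le> sqrt (\<Delta>\<^sup>2 / (1 + e))" unfolding q_def by (rule real_sqrt_le_mono)
  also have "sqrt (\<Delta>\<^sup>2 / (1 + e)) = \<Delta> / sqrt (1 + e)" using \<Delta> by (simp add: real_sqrt_divide)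
  finally have qle: "q \<le> \<Delta> / sqrt (1 + e)" .
  have s1: "sqrt (1 + e) > 1" using e by simp
  have "\<Delta> / sqrt (1 + e) \<le> \<Delta>" using s1 \<Delta> by (simp add: field_simps)
  then have qD: "q \<le> mus - mua" using qle unfolding \<Delta>_def by linarith
  have m: "measure M (E2s n k) \<le> exp (- 2 * real k * (mus - mua - q)\<^sup>2)"
    unfolding E2s_def using E2bound[OF k qD] by (simp add: f_def q_def)
  have r0: "0 \<le> \<Delta> * (1 - 1 / sqrt (1 + e))" using \<Delta> s1 by simp
  have "\<Delta> * (1 - 1 / sqrt (1 + e)) = \<Delta> - \<Delta> / sqrt (1 + e)" by (simp add: algebra_simps)
  then have r1: "\<Delta> * (1 - 1 / sqrt (1 + e)) \<le> mus - mua - q" using qle unfolding \<Delta>_def by linarith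
  have "(\<Delta> * (1 - 1 / sqrt (1 + e)))\<^sup>2 \<le> (mus - mua - q)\<^sup>2" using r0 r1 by (intro power_mono) auto
  then have "exp (- 2 * real k * (mus - mua - q)\<^sup>2) \<le> exp (- 2 * real k * (\<Delta> * (1 - 1 / sqrt (1 + e)))\<^sup>2)"
    using k by simp
  then show ?thesis using m unfolding \<Delta>_def by linarith
qed

lemma E2sum:
  assumes \<epsilon>: "\<epsilon> > 0"
  shows "\<exists>C2>0. \<exists>\<beta>>0. \<forall>n\<ge>3. (\<Sum>k\<in>{1..n}. measure M (E2s n k))
     \<le> ln (real n) / (2 * (mus - mua)\<^sup>2) * (1 + \<epsilon>) + 3 / (mus - mua)\<^sup>2 * ln (ln (real n)) + C2 / real n powr \<beta>"
proof -
  define \<Delta> where "\<Delta> = mus - mua"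
  have \<Delta>: "\<Delta> > 0" using gap unfolding \<Delta>_def mus_def mua_def by simp
  define e where "e = min \<epsilon> 1"
  have e0: "e > 0" and e1: "e \<le> 1" and e\<epsilon>: "e \<le> \<epsilon>" using \<epsilon> by (auto simp: e_def)
  have s1: "sqrt (1 + e) > 1" using e0 by simp
  define \<rho> where "\<rho> = 1 - 1 / sqrt (1 + e)"
  have \<rho>0: "\<rho> > 0" unfolding \<rho>_def using s1 by simp
  define c where "c = (\<Delta> * \<rho>)\<^sup>2"
  have c0: "c > 0" unfolding c_def using \<Delta> \<rho>0 by simp
  define w where "w = exp (- c)"
  have w0: "0 \<le> w" and w1: "w < 1" unfolding w_def using c0 by auto
  define C2 where "C2 = 1 / (1 - w)"
  define \<beta> where "\<beta> = (1 + e) * \<rho>\<^sup>2 / 2"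
  have C20: "C2 > 0" unfolding C2_def using w1 by simp
  have \<beta>0: "\<beta> > 0" unfolding \<beta>_def using e0 \<rho>0 by simp
  have main: "\<forall>n\<ge>3. (\<Sum>k\<in>{1..n}. measure M (E2s n k))
     \<le> ln (real n) / (2 * (mus - mua)\<^sup>2) * (1 + \<epsilon>) + 3 / (mus - mua)\<^sup>2 * ln (ln (real n)) + C2 / real n powr \<beta>"
  proof (intro allI impI)
    fix n :: nat assume n: "3 \<le> n"
    define L where "L = ln (real n)"
    have "ln 3 \<le> ln (real n)" using n by simp
    then have L1: "L \<ge> 1" unfolding L_def using ln3 by linarith
    have lnL: "ln L \<ge> 0" using L1 by simp
    define f where "f = fexp n"
    have f_eq: "f = L + 3 * ln L" unfolding f_def L_def fexp_def by simp
    have fL: "f \<ge> L" using f_eq lnL by simp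
    define u where "u = f * (1 + e) / (2 * \<Delta>\<^sup>2)"
    have u0: "u \<ge> 0" unfolding u_def using fL L1 e0 by simp
    have trm: "measure M (E2s n k) \<le> (if real k < u then 1 else exp (- u * c) * w^k)" if k: "k \<in> {1..n}" for k
    proof (cases "real k < u")
      case True then show ?thesis by simp
    next
      case False
      then have ku: "fexp n * (1 + e) / (2 * (mus - mua)\<^sup>2) \<le> real k" unfolding u_def f_def \<Delta>_def by simp
      have "measure M (E2s n k) \<le> exp (- 2 * real k * c)"
        using E2term[OF e0 _ n ku] k unfolding c_def \<rho>_def \<Delta>_def by simp
      also have "exp (- 2 * real k * c) = exp (- real k * c) * exp (- real k * c)" by (simp add: exp_add[symmetric])
      also have "\<dots> \<le> exp (- u * c) * exp (- real k * c)"
        using False c0 by (intro mult_right_mono) (auto simp: mult_right_mono)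
      also have "exp (- real k * c) = w^k" unfolding w_def by (simp add: exp_of_nat_mult[symmetric])
      finally show ?thesis using False by simp
    qed
    have "(\<Sum>k\<in>{1..n}. measure M (E2s n k)) \<le> (\<Sum>k\<in>{1..n}. (if real k < u then 1 else exp (- u * c) * w^k))"
      by (intro sum_mono trm)
    also have "\<dots> = real (card {k\<in>{1..n}. real k < u}) + exp (- u * c) * (\<Sum>k\<in>{k\<in>{1..n}. \<not> real k < u}. w^k)"
      by (simp add: sum.If_cases sum_distrib_left Int_def)
    also have "\<dots> \<le> u + exp (- u * c) * (1 / (1 - w))"
    proof (intro add_mono mult_left_mono)
      show "real (card {k\<in>{1..n}. real k < u}) \<le> u" by (rule card_small[OF u0])
      show "(\<Sum>k\<in>{k\<in>{1..n}. \<not> real k < u}. w^k) \<le> 1 / (1 - w)"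
        by (rule geom_bound[OF w0 w1, of _ n]) auto
    qed simp
    finally have S1: "(\<Sum>k\<in>{1..n}. measure M (E2s n k)) \<le> u + exp (- u * c) * (1 / (1 - w))" .
    have "exp (- u * c) \<le> 1 / real n powr \<beta>"
    proof -
      have uc: "u * c = f * \<beta>" unfolding u_def c_def \<beta>_def using \<Delta> by (simp add: power2_eq_square field_simps)
      have "L * \<beta> \<le> f * \<beta>" using fL \<beta>0 by (intro mult_right_mono) auto
      then have "exp (- u * c) \<le> exp (- L * \<beta>)" using uc by simp
      also have "exp (- L * \<beta>) = 1 / real n powr \<beta>" unfolding L_def powr_def using n
        by (simp add: exp_minus divide_inverse mult.commute)
      finally show ?thesis .
    qed
    then have "exp (- u * c) * (1 / (1 - w)) \<le> (1 / real n powr \<beta>) * (1 / (1 - w))"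
      using w1 by (intro mult_right_mono) auto
    then have S2: "u + exp (- u * c) * (1 / (1 - w)) \<le> u + C2 / real n powr \<beta>"
      unfolding C2_def by (simp add: mult.commute)
    have U: "u \<le> L / (2 * \<Delta>\<^sup>2) * (1 + \<epsilon>) + 3 / \<Delta>\<^sup>2 * ln L"
    proof -
      have "u = L / (2 * \<Delta>\<^sup>2) * (1 + e) + 3 * ln L * (1 + e) / (2 * \<Delta>\<^sup>2)"
        unfolding u_def f_eq using \<Delta> by (simp add: field_simps)
      also have "L / (2 * \<Delta>\<^sup>2) * (1 + e) \<le> L / (2 * \<Delta>\<^sup>2) * (1 + \<epsilon>)"
        using e\<epsilon> L1 \<Delta> by (intro mult_left_mono) auto
      also have "3 * ln L * (1 + e) / (2 * \<Delta>\<^sup>2) \<le> 3 * ln L * 2 / (2 * \<Delta>\<^sup>2)"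
        using e1 lnL \<Delta> by (intro divide_right_mono mult_left_mono) auto
      also have "3 * ln L * 2 / (2 * \<Delta>\<^sup>2) = 3 / \<Delta>\<^sup>2 * ln L" by simp
      finally show ?thesis by simp
    qed
    show "(\<Sum>k\<in>{1..n}. measure M (E2s n k))
     \<le> ln (real n) / (2 * (mus - mua)\<^sup>2) * (1 + \<epsilon>) + 3 / (mus - mua)\<^sup>2 * ln (ln (real n)) + C2 / real n powr \<beta>"
      using S1 S2 U unfolding L_def \<Delta>_def by linarith
  qed
  show ?thesis using main C20 \<beta>0 by blast
qed

end


theorem proposition1:
  fixes M :: "'w measure" and K :: nat and X :: "nat \<Rightarrow> nat \<Rightarrow> 'w \<Rightarrow> real"
    and tb :: "nat \<Rightarrow> nat list \<Rightarrow> real list \<Rightarrow> nat" and a astar :: nat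
  assumes "prob_space M"
    and "K \<ge> 2"
    and indep: "prob_space.indep_vars M (\<lambda>_. borel) (\<lambda>(b, s). X b s) ({1..K} \<times> {1..})"
    and ident: "\<forall>b\<in>{1..K}. \<forall>s\<ge>1. distr M borel (X b s) = distr M borel (X b 1)"
    and range: "\<forall>b\<in>{1..K}. \<forall>s\<ge>1. \<forall>\<omega>\<in>space M. 0 \<le> X b s \<omega> \<and> X b s \<omega> \<le> 1"
    and ucb: "\<forall>t h r. K < t \<longrightarrow> length h = t - 1 \<longrightarrow> length r = t - 1
                \<longrightarrow> is_ucb_choice K t h r (tb t h r)"
    and meas: "\<forall>n. (\<lambda>\<omega>. fst (ucb_play K tb (\<lambda>b s. X b s \<omega>) n)) \<in> measurable M (count_space UNIV)"
    and "astar \<in> {1..K}"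
    and "\<forall>b\<in>{1..K}. (\<integral>\<omega>. X b 1 \<omega> \<partial>M) \<le> (\<integral>\<omega>. X astar 1 \<omega> \<partial>M)"
    and "a \<in> {1..K}"
    and "(\<integral>\<omega>. X a 1 \<omega> \<partial>M) < (\<integral>\<omega>. X astar 1 \<omega> \<partial>M)"
  shows "\<exists>C1>0. \<forall>\<epsilon>>0. \<exists>C2>0. \<exists>\<beta>>0. \<forall>n::nat\<ge>3.
           (\<integral>\<omega>. real (pulls K tb (\<lambda>b s. X b s \<omega>) n a) \<partial>M)
           \<le> ln (real n) / (2 * ((\<integral>\<omega>. X a 1 \<omega> \<partial>M) - (\<integral>\<omega>. X astar 1 \<omega> \<partial>M))\<^sup>2) * (1 + \<epsilon>)
             + C1 * ln (ln (real n)) + C2 / real n powr \<beta>"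
proof -
  interpret B: bandit M K X tb a astar
    by (rule bandit.intro[OF assms(1) bandit_axioms.intro[OF assms(2-11)]])
  define \<Delta> where "\<Delta> = B.mus - B.mua"
  have \<Delta>: "\<Delta> > 0" using assms(11) unfolding \<Delta>_def B.mus_def B.mua_def by simp
  have sq: "((\<integral>\<omega>. X a 1 \<omega> \<partial>M) - (\<integral>\<omega>. X astar 1 \<omega> \<partial>M))\<^sup>2 = \<Delta>\<^sup>2"
    unfolding \<Delta>_def B.mus_def B.mua_def by (simp add: power2_commute)
  define C1 where "C1 = 6 + 3 / \<Delta>\<^sup>2 + 147"
  have C10: "C1 > 0" unfolding C1_def using \<Delta> by (simp add: add_pos_nonneg)
  have "\<forall>\<epsilon>>0. \<exists>C2>0. \<exists>\<beta>>0. \<forall>n::nat\<ge>3.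
           (\<integral>\<omega>. real (pulls K tb (\<lambda>b s. X b s \<omega>) n a) \<partial>M)
           \<le> ln (real n) / (2 * \<Delta>\<^sup>2) * (1 + \<epsilon>) + C1 * ln (ln (real n)) + C2 / real n powr \<beta>"
  proof (intro allI impI)
    fix \<epsilon> :: real assume \<epsilon>: "\<epsilon> > 0"
    obtain C2 \<beta> where C2: "C2 > 0" and \<beta>: "\<beta> > 0" and b2: "\<forall>n\<ge>3. (\<Sum>k\<in>{1..n}. measure M (B.E2s n k))
     \<le> ln (real n) / (2 * (B.mus - B.mua)\<^sup>2) * (1 + \<epsilon>) + 3 / (B.mus - B.mua)\<^sup>2 * ln (ln (real n)) + C2 / real n powr \<beta>"
      using B.E2sum[OF \<epsilon>] by blast
    have "\<forall>n::nat\<ge>3. (\<integral>\<omega>. real (pulls K tb (\<lambda>b s. X b s \<omega>) n a) \<partial>M)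
           \<le> ln (real n) / (2 * \<Delta>\<^sup>2) * (1 + \<epsilon>) + C1 * ln (ln (real n)) + C2 / real n powr \<beta>"
    proof (intro allI impI)
      fix n :: nat assume n: "3 \<le> n"
      have "ln (ln 3) \<le> ln (ln (real n))" using n by (subst ln_le_cancel_iff) auto
      then have ll: "ln (ln (real n)) \<ge> 1/21" using lnln3 by linarith
      have d: "(\<integral>\<omega>. real (pulls K tb (\<lambda>b s. X b s \<omega>) n a) \<partial>M) \<le> 1 + (\<Sum>t\<in>{K<..n}. measure M (B.E1s t)) + (\<Sum>k\<in>{1..n}. measure M (B.E2s n k))"
        by (rule B.expect_decomp)
      have e1: "(\<Sum>t\<in>{K<..n}. measure M (B.E1s t)) \<le> 6 * ln (ln (real n)) + 6" by (rule B.E1sum[OF n])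
      have e2: "(\<Sum>k\<in>{1..n}. measure M (B.E2s n k)) \<le> ln (real n) / (2 * \<Delta>\<^sup>2) * (1 + \<epsilon>) + 3 / \<Delta>\<^sup>2 * ln (ln (real n)) + C2 / real n powr \<beta>"
        using b2 n unfolding \<Delta>_def by blast
      have "7 \<le> 147 * ln (ln (real n))" using ll by linarith
      then show "(\<integral>\<omega>. real (pulls K tb (\<lambda>b s. X b s \<omega>) n a) \<partial>M)
           \<le> ln (real n) / (2 * \<Delta>\<^sup>2) * (1 + \<epsilon>) + C1 * ln (ln (real n)) + C2 / real n powr \<beta>"
        using d e1 e2 unfolding C1_def by (simp add: algebra_simps)
    qed
    then show "\<exists>C2>0. \<exists>\<beta>>0. \<forall>n::nat\<ge>3.
           (\<integral>\<omega>. real (pulls K tb (\<lambda>b s. X b s \<omega>) n a) \<partial>M)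
           \<le> ln (real n) / (2 * \<Delta>\<^sup>2) * (1 + \<epsilon>) + C1 * ln (ln (real n)) + C2 / real n powr \<beta>"
      using C2 \<beta> by blast
  qed
  then show ?thesis unfolding sq using C10 by blast
qed


end
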